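(* Let $\kappa>0$, $-1<\sigma\le 0$, $\Delta t>0$, and initial data $a^0<b^0$ and $u^0$ with $V:=\int_{a^0}^{b^0}u^0\,dx>0$. Let $T>0$ satisfy $T<\frac{b^0-a^0}{2(1+\sigma)}$. Let $(a^n,b^n,u^n,\lambda^n)$ be generated by either the first order scheme or the second order scheme described in the context (with arbitrary real values of the one-sided derivative approximations, and assuming the elliptic problems involved admit solutions). Then for every integer $n\ge0$ with $(n+1)\Delta t\le T$: (i) $a^0+\sigma T\le a^{n+1}\le a^0+(1+\sigma)T$ and $b^0-(1+\sigma)T\le b^{n+1}\le b^0-\sigma T$; (ii) $0\le \lambda^{n+1}\le \dfrac{\kappa V+2}{b^0-a^0-2(1+\sigma)T}$; (iii) $\displaystyle\int_{a^{n+1}}^{b^{n+1}}\Big(\sqrt{1+(\partial_x u^{n+1})^2}+\kappa (u^{n+1})^2\Big)dx\le \frac{\kappa V^2+2V}{b^0-a^0-2(1+\sigma)T}+b^0-a^0-2\sigma T$. In particular $\lambda^{n+1}$ and the integral in (iii) are bounded by a constant depending only on $a^0,b^0,T,V,\kappa,\sigma$.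
   Context: Elliptic step: given $a<b$, $(u,\lambda)$ with $u\in C^2((a,b))\cap C^1([a,b])$ is said to solve the quasi-static problem on $(a,b)$ with volume $V$ if $$\partial_x\Big(\frac{\partial_x u}{\sqrt{1+(\partial_x u)^2}}\Big)-\kappa u+\lambda=0 \text{ on }(a,b),\quad u(a)=u(b)=0,\quad \int_a^b u\,dx=V.$$ First order scheme: given $a^n,b^n,u^n$ and real numbers $d_0^n,d_N^n$ (approximations of $\partial_x u^n$ at $a^n$ and $b^n$), set $$\frac{a^{n+1}-a^n}{\Delta t}=\sigma+\frac{1}{\sqrt{1+(d_0^n)^2}},\qquad \frac{b^{n+1}-b^n}{\Delta t}=-\sigma-\frac{1}{\sqrt{1+(d_N^n)^2}},$$ and let $(u^{n+1},\lambda^{n+1})$ solve the quasi-static problem on $(a^{n+1},b^{n+1})$ with volume $V$. Second order scheme: first perform the first order step to get a predictor $(\tilde a^{n+1},\tilde b^{n+1},\tilde u^{n+1})$; with real numbers $\tilde d_0^{n+1},\tilde d_N^{n+1}$ (approximations of $\partial_x\tilde u^{n+1}$ at $\tilde a^{n+1},\tilde b^{n+1}$) set $$\frac{a^{n+1}-a^n}{\Delta t}=\sigma+\frac12\Big(\frac{1}{\sqrt{1+(d_0^n)^2}}+\frac{1}{\sqrt{1+(\tilde d_0^{n+1})^2}}\Big),\quad \frac{b^{n+1}-b^n}{\Delta t}=-\sigma-\frac12\Big(\frac{1}{\sqrt{1+(d_N^n)^2}}+\frac{1}{\sqrt{1+(\tilde d_N^{n+1})^2}}\Big),$$ and let $(u^{n+1},\lambda^{n+1})$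 solve the quasi-static problem on $(a^{n+1},b^{n+1})$ with volume $V$. *)

theory Defs
  imports "HOL-Analysis.Analysis"
begin

definition quasi_static :: "real \<Rightarrow> real \<Rightarrow> real \<Rightarrow> real \<Rightarrow> (real \<Rightarrow> real) \<Rightarrow> real \<Rightarrow> bool" where
  "quasi_static \<kappa> a b V u lam \<longleftrightarrow>
     a < b \<and>
     (\<exists>u' u''.
        (\<forall>x\<in>{a..b}. (u has_real_derivative u' x) (at x within {a..b})) \<and>
        continuous_on {a..b} u' \<and>
        (\<forall>x\<in>{a<..<b}. (u' has_real_derivative u'' x) (at x)) \<and>
        continuous_on {a<..<b} u'' \<and>
        (\<forall>x\<in>{a<..<b}.
           ((\<lambda>y. u' y / sqrt (1 + (u' y)\<^sup>2)) has_real_derivative (\<kappa> * u x - lam)) (at x))) \<and>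
     u a = 0 \<and> u b = 0 \<and>
     integral {a..b} u = V"

definition first_order_step :: "real \<Rightarrow> real \<Rightarrow> real \<Rightarrow> real \<Rightarrow> real \<Rightarrow> real \<Rightarrow> real \<Rightarrow> real \<Rightarrow> bool" where
  "first_order_step \<sigma> dt a b d0 dN a' b' \<longleftrightarrow>
     (a' - a) / dt = \<sigma> + 1 / sqrt (1 + d0\<^sup>2) \<and>
     (b' - b) / dt = - \<sigma> - 1 / sqrt (1 + dN\<^sup>2)"

definition second_order_step :: "real \<Rightarrow> real \<Rightarrow> real \<Rightarrow> real \<Rightarrow> real \<Rightarrow> real \<Rightarrow> real \<Rightarrow> real
      \<Rightarrow> real \<Rightarrow> real \<Rightarrow> real \<Rightarrow> real \<Rightarrow> bool" where
  "second_order_step \<kappa> V \<sigma> dt a b d0 dN dt0 dtN a' b' \<longleftrightarrow>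
     (\<exists>ap bp ut lamt.
        first_order_step \<sigma> dt a b d0 dN ap bp \<and>
        quasi_static \<kappa> ap bp V ut lamt \<and>
        (a' - a) / dt = \<sigma> + (1 / sqrt (1 + d0\<^sup>2) + 1 / sqrt (1 + dt0\<^sup>2)) / 2 \<and>
        (b' - b) / dt = - \<sigma> - (1 / sqrt (1 + dN\<^sup>2) + 1 / sqrt (1 + dtN\<^sup>2)) / 2)"

end

theory Submission
  imports Defs
begin


lemma nz1: "1 + (p::real)^2 \<noteq> 0" by (smt (verit) zero_le_power2)

lemma isb1: "0 < 1/sqrt(1+(d::real)^2)"
proof -
  have s: "sqrt(1+d^2) \<ge> 1" by simp
  hence "0 < sqrt(1+d^2)" by linarith
  thus ?thesis by simp
qed

lemma le1inv: "(s::real) \<ge> 1 \<Longrightarrow> 1/s \<le> 1" by simp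

lemma avg01: "0<(x::real) \<Longrightarrow> x \<le>1 \<Longrightarrow> 0<y \<Longrightarrow> y\<le>1 \<Longrightarrow> 0 < (x+y)/2 \<and> (x+y)/2 \<le> 1" by auto

lemma isb2: "1/sqrt(1+(d::real)^2) \<le> 1"
  by (rule le1inv) simp

lemma inv_sqrt_bounds: "0 < 1/sqrt(1+(d::real)^2) \<and> 1/sqrt(1+d^2) \<le> 1"
  using isb1 isb2 by blast

lemma first_step_bounds:
  assumes "first_order_step \<sigma> dt a b d0 dN a' b'" "dt > 0"
  shows "\<sigma>*dt \<le> a'-a \<and> a'-a \<le> (1+\<sigma>)*dt \<and> -(1+\<sigma>)*dt \<le> b'-b \<and> b'-b \<le> -\<sigma>*dt"
proof -
  define c where "c = 1/sqrt(1+d0^2)"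
  define e where "e = 1/sqrt(1+dN^2)"
  have c: "0 < c" "c \<le> 1" using inv_sqrt_bounds[of d0] c_def by auto
  have e: "0 < e" "e \<le> 1" using inv_sqrt_bounds[of dN] e_def by auto
  have 1: "a' - a = dt*(\<sigma>+c)" "b' - b = dt*(-\<sigma>-e)"
    using assms unfolding first_order_step_def c_def e_def by (auto simp: field_simps)
  show ?thesis unfolding 1 using c e assms(2)
    by (auto simp: algebra_simps intro: mult_left_mono)
qed

lemma second_step_bounds:
  assumes "second_order_step \<kappa> V \<sigma> dt a b d0 dN dt0 dtN a' b'" "dt > 0"
  shows "\<sigma>*dt \<le> a'-a \<and> a'-a \<le> (1+\<sigma>)*dt \<and> -(1+\<sigma>)*dt \<le> b'-b \<and> b'-b \<le> -\<sigma>*dt"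
proof -
  define c where "c = (1/sqrt(1+d0^2) + 1/sqrt(1+dt0^2))/2"
  define e where "e = (1/sqrt(1+dN^2) + 1/sqrt(1+dtN^2))/2"
  have c: "0 < c" "c \<le> 1" using avg01[OF isb1[of d0] isb2[of d0] isb1[of dt0] isb2[of dt0]] unfolding c_def by blast+
  have e: "0 < e" "e \<le> 1" using avg01[OF isb1[of dN] isb2[of dN] isb1[of dtN] isb2[of dtN]] unfolding e_def by blast+
  have 1: "a' - a = dt*(\<sigma>+c)" "b' - b = dt*(-\<sigma>-e)"
    using assms unfolding second_order_step_def c_def e_def by (auto simp: field_simps)
  show ?thesis unfolding 1 using c e assms(2)
    by (auto simp: algebra_simps intro: mult_left_mono)
qed

lemma absdiv1: "0 < (s::real) \<Longrightarrow> \<bar>p\<bar> \<le> s \<Longrightarrow> \<bar>p/s\<bar> \<le> 1" by (simp add: abs_divide)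
lemma posdiv: "0 < (s::real) \<Longrightarrow> 0 < p/s \<Longrightarrow> 0 < p" by (simp add: zero_less_divide_iff)
lemma sqb: assumes s1: "(s::real) \<ge> 1" and ss: "s * s = 1+p^2" shows "s \<le> p^2/s + 1"
proof -
  have "s = (s * s)/s" using s1 by simp
  also have "\<dots> = p^2/s + 1/s" unfolding ss by (simp add: add_divide_distrib)
  also have "\<dots> \<le> p^2/s + 1" using s1 by simp
  finally show ?thesis .
qed
lemma sqss: "sqrt(1+p^2) * sqrt(1+(p::real)^2) = 1+p^2" by (simp add: add_pos_nonneg)
lemma pdiv: "(p::real)/sqrt(1+p^2) * p = p^2/sqrt(1+p^2)" by (simp add: power2_eq_square)

lemma qs_props:
  assumes qs: "quasi_static \<kappa> a b V u lam" and kp: "\<kappa> > 0" and Vp: "V > 0"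
  shows "0 \<le> lam" "lam*(b-a) \<le> \<kappa>*V+2"
    "integral {a..b} (\<lambda>x. sqrt(1+(deriv u x)^2) + \<kappa>*(u x)^2) \<le> lam*V + (b-a)"
proof -
  from qs obtain u' u'' where ab: "a < b"
    and du: "\<And>x. x\<in>{a..b} \<Longrightarrow> (u has_real_derivative u' x) (at x within {a..b})"
    and cu': "continuous_on {a..b} u'"
    and dg: "\<And>x. x\<in>{a<..<b} \<Longrightarrow>
           ((\<lambda>y. u' y / sqrt (1 + (u' y)\<^sup>2)) has_real_derivative (\<kappa> * u x - lam)) (at x)"
    and ua: "u a = 0" and ub: "u b = 0" and iu: "integral {a..b} u = V"
    unfolding quasi_static_def by blast
  define g where "g = (\<lambda>y. u' y / sqrt (1 + (u' y)\<^sup>2))"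
  have sq_pos: "\<And>p::real. sqrt(1+p^2) > 0" by (simp add: add_pos_nonneg)
  have duat: "(u has_real_derivative u' x) (at x)" if "x\<in>{a<..<b}" for x
  proof -
    have "x \<in> interior {a..b}" using that by simp
    hence e: "at x within {a..b} = at x" by (rule at_within_interior)
    have "x \<in> {a..b}" using that by auto
    from du[OF this] show ?thesis unfolding e .
  qed
  have cu: "continuous_on {a..b} u"
    unfolding continuous_on_eq_continuous_within using du DERIV_continuous by blast
  have cg: "continuous_on {a..b} g" unfolding g_def
    using cu' nz1 by (intro continuous_intros) auto
  have gb: "\<bar>g x\<bar> \<le> 1" for x
  proof -
    have "\<bar>u' x\<bar> = sqrt((u' x)^2)" by simp
    also have "\<dots> \<le> sqrt(1+(u' x)^2)" by (intro real_sqrt_le_mono) simp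
    finally show ?thesis unfolding g_def by (rule absdiv1[OF sq_pos])
  qed
  have iu_has: "(u has_integral V) {a..b}"
    using integrable_continuous_interval[OF cu] iu by (metis has_integral_integral)
  have ftc1: "((\<lambda>x. \<kappa>*u x - lam) has_integral (g b - g a)) {a..b}"
    apply (rule fundamental_theorem_of_calculus_interior)
    using ab cg dg unfolding g_def by (auto simp: has_real_derivative_iff_has_vector_derivative[symmetric])
  have h2: "((\<lambda>x. \<kappa>*u x - lam) has_integral (\<kappa>*V - lam*(b-a))) {a..b}"
    using has_integral_diff[OF has_integral_mult_right[OF iu_has, of \<kappa>] has_integral_const_real[of lam a b]]
    using ab by (simp add: mult.commute)
  have eq1: "\<kappa>*V - lam*(b-a) = g b - g a" using has_integral_unique[OF h2 ftc1] .
  show "lam*(b-a) \<le> \<kappa>*V+2" using eq1 gb[of a] gb[of b] by linarith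
  show "0 \<le> lam"
  proof (rule ccontr)
    assume "\<not> 0 \<le> lam" hence lneg: "lam < 0" by simp
    obtain x0 where x0: "x0 \<in> {a..b}" and mx: "\<And>y. y\<in>{a..b} \<Longrightarrow> u y \<le> u x0"
      using continuous_attains_sup[OF compact_Icc _ cu] ab by auto
    have ux0: "u x0 > 0"
    proof (rule ccontr)
      assume "\<not> u x0 > 0"
      hence "\<And>y. y\<in>{a..b} \<Longrightarrow> u y \<le> 0" using mx by force
      hence "V \<le> 0" using has_integral_le[OF iu_has has_integral_0] by force
      thus False using Vp by simp
    qed
    have x0i: "x0 \<in> {a<..<b}" using x0 ux0 ua ub
      by (metis atLeastAtMost_iff greaterThanLessThan_iff less_eq_real_def less_irrefl)
    have u'0: "u' x0 = 0"
    proof (rule DERIV_local_max[OF duat[OF x0i], of "min (x0-a) (b-x0)"])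
      show "0 < min (x0-a) (b-x0)" using x0i by simp
      show "\<forall>y. \<bar>x0 - y\<bar> < min (x0 - a) (b - x0) \<longrightarrow> u y \<le> u x0"
        using mx by (auto simp: abs_if split: if_splits)
    qed
    have g0: "g x0 = 0" unfolding g_def u'0 by simp
    have "\<kappa>*u x0 - lam > 0" using mult_pos_pos[OF kp ux0] lneg by linarith
    then obtain d where d: "d > 0" "\<And>h. h>0 \<Longrightarrow> h < d \<Longrightarrow> g x0 < g (x0+h)"
      using DERIV_pos_inc_right[OF dg[OF x0i, folded g_def]] by blast
    define y where "y = x0 + min d (b-x0) / 2"
    have y: "x0 < y" "y < b" "y - x0 < d" using d x0i unfolding y_def by (auto simp: min_def field_simps)
    have pos: "u' t > 0" if "x0 < t" "t \<le> y" for t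
    proof -
      have "g t > 0" using d(2)[of "t-x0"] g0 that y by auto
      thus ?thesis unfolding g_def by (rule posdiv[OF sq_pos])
    qed
    obtain z where z: "z > x0" "z < y" "u y - u x0 = (y - x0) * u' z"
      using MVT2[of x0 y u u'] y duat x0i by force
    have "u y - u x0 > 0" unfolding z(3) using pos[of z] z y by simp
    moreover have "u y \<le> u x0" using mx y x0i by simp
    ultimately show False by simp
  qed
  have dh: "((\<lambda>y. g y * u y) has_real_derivative
      ((\<kappa>*u x - lam) * u x + g x * u' x)) (at x)" if "x\<in>{a<..<b}" for x
    using DERIV_mult[OF dg[OF that, folded g_def] duat[OF that]] by (simp add: mult.commute)
  have ch: "continuous_on {a..b} (\<lambda>y. g y * u y)" using cg cu by (intro continuous_intros)
  define H where "H = (\<lambda>x. (\<kappa>*u x - lam) * u x + g x * u' x)"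
  have ftc2: "(H has_integral 0) {a..b}"
    using fundamental_theorem_of_calculus_interior[of a b "\<lambda>y. g y * u y" H] ab ch dh ua ub
    unfolding H_def by (auto simp: has_real_derivative_iff_has_vector_derivative[symmetric])
  define F where "F = (\<lambda>x. sqrt(1+(u' x)^2) + \<kappa>*(u x)^2)"
  have cF: "continuous_on {a..b} F" unfolding F_def using cu cu' by (intro continuous_intros)
  have Fh: "(F has_integral integral {a..b} F) {a..b}"
    using integrable_continuous_interval[OF cF] by (rule integrable_integral)
  have G: "((\<lambda>x. H x + lam * u x + 1) has_integral (0 + lam*V + (b-a))) {a..b}"
    using has_integral_add[OF has_integral_add[OF ftc2 has_integral_mult_right[OF iu_has, of lam]]
        has_integral_const_real[of 1 a b]] ab by (simp add: mult.commute)
  have FG: "F x \<le> H x + lam * u x + 1" for x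
  proof -
    define p where "p = u' x"
    define s where "s = sqrt(1+p^2)"
    have s1: "s \<ge> 1" unfolding s_def by simp
    have ss: "s * s = 1+p^2" unfolding s_def by (rule sqss)
    have A: "s \<le> p^2/s + 1" by (rule sqb[OF s1 ss])
    have B: "g x * u' x = p^2/s" unfolding g_def p_def s_def by (rule pdiv)
    have "F x = s + \<kappa>*(u x)^2" unfolding F_def s_def p_def ..
    moreover have "H x + lam * u x + 1 = p^2/s + \<kappa>*(u x)^2 + 1"
      unfolding H_def B by (simp add: algebra_simps power2_eq_square)
    ultimately show ?thesis using A by linarith
  qed
  have "integral {a..b} F \<le> 0 + lam*V + (b-a)" using has_integral_le[OF Fh G FG] .
  moreover have "integral {a..b} (\<lambda>x. sqrt(1+(deriv u x)^2) + \<kappa>*(u x)^2) = integral {a..b} F"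
  proof (rule integral_spike[of "{a,b}"])
    show "negligible {a,b}" by simp
    fix x assume "x \<in> {a..b} - {a,b}"
    hence "x \<in> {a<..<b}" by auto
    hence "deriv u x = u' x" using duat DERIV_imp_deriv by blast
    thus "F x = sqrt(1+(deriv u x)^2) + \<kappa>*(u x)^2" unfolding F_def by simp
  qed
  ultimately show "integral {a..b} (\<lambda>x. sqrt(1+(deriv u x)^2) + \<kappa>*(u x)^2) \<le> lam*V + (b-a)" by simp
qed



theorem proposition3p1:
  fixes \<kappa> \<sigma> \<Delta>t T V :: real
    and a b :: "nat \<Rightarrow> real" and u :: "nat \<Rightarrow> real \<Rightarrow> real" and lam :: "nat \<Rightarrow> real"
    and d0 dN dt0 dtN :: "nat \<Rightarrow> real"
  assumes "\<kappa> > 0" and "-1 < \<sigma>" and "\<sigma> \<le> 0" and "\<Delta>t > 0"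
    and "a 0 < b 0"
    and "V = integral {a 0..b 0} (u 0)" and "V > 0"
    and "T > 0" and "T < (b 0 - a 0) / (2 * (1 + \<sigma>))"
    and scheme:
      "(\<forall>k. real (Suc k) * \<Delta>t \<le> T \<longrightarrow>
              first_order_step \<sigma> \<Delta>t (a k) (b k) (d0 k) (dN k) (a (Suc k)) (b (Suc k)))
     \<or> (\<forall>k. real (Suc k) * \<Delta>t \<le> T \<longrightarrow>
              second_order_step \<kappa> V \<sigma> \<Delta>t (a k) (b k) (d0 k) (dN k) (dt0 (Suc k)) (dtN (Suc k))
                (a (Suc k)) (b (Suc k)))"
    and elliptic:
      "\<forall>k. real (Suc k) * \<Delta>t \<le> T \<longrightarrow>
              quasi_static \<kappa> (a (Suc k)) (b (Suc k)) V (u (Suc k)) (lam (Suc k))"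
    and "real (Suc n) * \<Delta>t \<le> T"
  shows "a 0 + \<sigma> * T \<le> a (Suc n) \<and> a (Suc n) \<le> a 0 + (1 + \<sigma>) * T \<and>
         b 0 - (1 + \<sigma>) * T \<le> b (Suc n) \<and> b (Suc n) \<le> b 0 - \<sigma> * T \<and>
         0 \<le> lam (Suc n) \<and>
         lam (Suc n) \<le> (\<kappa> * V + 2) / (b 0 - a 0 - 2 * (1 + \<sigma>) * T) \<and>
         integral {a (Suc n)..b (Suc n)}
           (\<lambda>x. sqrt (1 + (deriv (u (Suc n)) x)\<^sup>2) + \<kappa> * (u (Suc n) x)\<^sup>2)
         \<le> (\<kappa> * V\<^sup>2 + 2 * V) / (b 0 - a 0 - 2 * (1 + \<sigma>) * T) + b 0 - a 0 - 2 * \<sigma> * T"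
  proof -
  note kp = assms(1) and sg = assms(2) assms(3) and dtp = assms(4) and ab0 = assms(5)
  note Vp = assms(7) and Tp = assms(8) and Tl = assms(9) and nT = assms(12)
  have st: "\<sigma>*\<Delta>t \<le> a (Suc k) - a k \<and> a (Suc k) - a k \<le> (1+\<sigma>)*\<Delta>t \<and>
      -(1+\<sigma>)*\<Delta>t \<le> b (Suc k) - b k \<and> b (Suc k) - b k \<le> -\<sigma>*\<Delta>t"
    if "real (Suc k) * \<Delta>t \<le> T" for k
    using scheme
  proof
    assume "\<forall>k. real (Suc k) * \<Delta>t \<le> T \<longrightarrow>
              first_order_step \<sigma> \<Delta>t (a k) (b k) (d0 k) (dN k) (a (Suc k)) (b (Suc k))"
    then show ?thesis using first_step_bounds that dtp by blast
  next
    assume "\<forall>k. real (Suc k) * \<Delta>t \<le> T \<longrightarrow>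
              second_order_step \<kappa> V \<sigma> \<Delta>t (a k) (b k) (d0 k) (dN k) (dt0 (Suc k)) (dtN (Suc k))
                (a (Suc k)) (b (Suc k))"
    then show ?thesis using second_step_bounds that dtp by blast
  qed
  have ind: "a 0 + \<sigma>*(real m*\<Delta>t) \<le> a m \<and> a m \<le> a 0 + (1+\<sigma>)*(real m*\<Delta>t) \<and>
     b 0 - (1+\<sigma>)*(real m * \<Delta>t) \<le> b m \<and> b m \<le> b 0 - \<sigma>*(real m*\<Delta>t)"
    if "m \<le> Suc n" for m
    using that
  proof (induction m)
    case 0 then show ?case by simp
  next
    case (Suc m)
    have "real (Suc m) \<le> real (Suc n)" using Suc.prems by linarith
    hence "real (Suc m) * \<Delta>t \<le> real (Suc n) * \<Delta>t" using dtp by (intro mult_right_mono) auto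
    hence "real (Suc m) * \<Delta>t \<le> T" using nT by linarith
    note S = st[OF this]
    have IH: "a 0 + \<sigma>*(real m*\<Delta>t) \<le> a m \<and> a m \<le> a 0 + (1+\<sigma>)*(real m*\<Delta>t) \<and>
     b 0 - (1+\<sigma>)*(real m * \<Delta>t) \<le> b m \<and> b m \<le> b 0 - \<sigma>*(real m*\<Delta>t)"
      using Suc by simp
    have e1: "\<sigma>*(real (Suc m)*\<Delta>t) = \<sigma>*(real m*\<Delta>t) + \<sigma>*\<Delta>t" by (simp add: algebra_simps)
    have e2: "(1+\<sigma>)*(real (Suc m)*\<Delta>t) = (1+\<sigma>)*(real m*\<Delta>t) + (1+\<sigma>)*\<Delta>t" by (simp add: algebra_simps)
    show ?case unfolding e1 e2 using S IH by linarith
  qed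
  define tt where "tt = real (Suc n) * \<Delta>t"
  have I: "a 0 + \<sigma>*tt \<le> a (Suc n) \<and> a (Suc n) \<le> a 0 + (1+\<sigma>)*tt \<and>
     b 0 - (1+\<sigma>)*tt \<le> b (Suc n) \<and> b (Suc n) \<le> b 0 - \<sigma>*tt" using ind[of "Suc n"] unfolding tt_def by simp
  have ttT: "tt \<le> T" using nT tt_def by simp
  have m1: "\<sigma>*T \<le> \<sigma>*tt" using mult_left_mono_neg[OF ttT sg(2)] .
  have m2: "(1+\<sigma>)*tt \<le> (1+\<sigma>)*T" using mult_left_mono[OF ttT] sg(1) by simp
  have part1: "a 0 + \<sigma> * T \<le> a (Suc n) \<and> a (Suc n) \<le> a 0 + (1 + \<sigma>) * T \<and>
         b 0 - (1 + \<sigma>) * T \<le> b (Suc n) \<and> b (Suc n) \<le> b 0 - \<sigma> * T"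
    using I m1 m2 by linarith
  define L0 where "L0 = b 0 - a 0 - 2 * (1 + \<sigma>) * T"
  have L0p: "L0 > 0"
  proof -
    have "0 < 2*(1+\<sigma>)" using sg by simp
    hence "T * (2*(1+\<sigma>)) < b 0 - a 0" using Tl by (simp add: pos_less_divide_eq)
    thus ?thesis unfolding L0_def by (simp add: algebra_simps)
  qed
  define L where "L = b (Suc n) - a (Suc n)"
  have LL0: "L0 \<le> L" unfolding L_def L0_def using part1 by (simp add: algebra_simps)
  have Lup: "L \<le> b 0 - a 0 - 2 * \<sigma> * T" unfolding L_def using part1 by (simp add: algebra_simps)
  have qs: "quasi_static \<kappa> (a (Suc n)) (b (Suc n)) V (u (Suc n)) (lam (Suc n))"
    using elliptic nT by blast
  note P = qs_props[OF qs kp Vp]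
  have lam0: "0 \<le> lam (Suc n)" using P(1) .
  have "lam (Suc n) * L0 \<le> lam (Suc n) * L" using mult_left_mono[OF LL0 lam0] .
  hence lL0: "lam (Suc n) * L0 \<le> \<kappa>*V+2" using P(2) unfolding L_def by linarith
  have lamb: "lam (Suc n) \<le> (\<kappa> * V + 2) / L0" using lL0 L0p by (simp add: pos_le_divide_eq)
  have "lam (Suc n) * V \<le> (\<kappa> * V + 2) / L0 * V" using mult_right_mono[OF lamb] Vp by simp
  also have "\<dots> = (\<kappa> * V\<^sup>2 + 2 * V) / L0" by (simp add: field_simps power2_eq_square)
  finally have lV: "lam (Suc n) * V \<le> (\<kappa> * V\<^sup>2 + 2 * V) / L0" .
  have intb: "integral {a (Suc n)..b (Suc n)}
           (\<lambda>x. sqrt (1 + (deriv (u (Suc n)) x)\<^sup>2) + \<kappa> * (u (Suc n) x)\<^sup>2)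
         \<le> (\<kappa> * V\<^sup>2 + 2 * V) / L0 + b 0 - a 0 - 2 * \<sigma> * T"
    using P(3) lV Lup unfolding L_def by linarith
  show ?thesis using part1 lam0 lamb intb unfolding L0_def by blast
qed

end
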